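(* Assume the narrow class number of $F$ is $1$, and let $\delta$ be a generator of the different $\mathfrak{d}$. Let $q\in\mathcal{O}$ be nonzero, $m,\ell$ positive integers, $\nu,\mu\in\mathfrak{d}^{-1}$, and let $p$ be a prime element dividing $q$ such that $p\nmid\delta\nu$ and $p\nmid\delta\mu$ in $\mathcal{O}$. Then $$S(\nu p^m,\mu p^\ell;q)=S(\nu,\mu p^{m+\ell};q)+N((p))\,S\left(\nu p^{m-1},\mu p^{\ell-1};\frac{q}{p}\right).$$
   Context: $F$ is a totally real number field with ring of integers $\mathcal{O}$ and different $\mathfrak{d}$ (principal when the narrow class number is $1$). A prime element is a generator of a nonzero prime ideal. $e(\nu)=\exp(2\pi i\,\mathrm{Tr}_{F/\mathbb{Q}}(\nu))$. For $\nu,\mu\in\mathfrak{d}^{-1}$ and nonzero $q\in\mathcal{O}$, $S(\nu,\mu;q)=\sum_{x\in(\mathcal{O}/q\mathcal{O})^\times}e\left(\frac{\nu x+\mu x^{-1}}{q}\right)$, where $xx^{-1}\equiv1\bmod q$. *)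

theory Defs
  imports Complex_Main "HOL-Computational_Algebra.Polynomial"
begin

text \<open>A number field is modelled as a subfield K of the complex numbers that is
finite-dimensional over the rationals.\<close>

definition nf_subfield :: "complex set \<Rightarrow> bool" where
  "nf_subfield K \<longleftrightarrow> 0 \<in> K \<and> 1 \<in> K \<and>
     (\<forall>a\<in>K. \<forall>b\<in>K. a + b \<in> K \<and> a - b \<in> K \<and> a * b \<in> K) \<and>
     (\<forall>a\<in>K. a \<noteq> 0 \<longrightarrow> inverse a \<in> K)"

definition number_field :: "complex set \<Rightarrow> bool" where
  "number_field K \<longleftrightarrow> nf_subfield K \<and>
     (\<exists>B. finite B \<and> B \<subseteq> K \<and>
        (\<forall>x\<in>K. \<exists>r :: complex \<Rightarrow> rat. x = (\<Sum>b\<in>B. of_rat (r b) * b)))"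

text \<open>Field embeddings of K into the complex numbers (normalised to 0 outside K).\<close>
definition nf_embeddings :: "complex set \<Rightarrow> (complex \<Rightarrow> complex) set" where
  "nf_embeddings K = {\<sigma>. \<sigma> 1 = 1 \<and>
     (\<forall>a\<in>K. \<forall>b\<in>K. \<sigma> (a + b) = \<sigma> a + \<sigma> b \<and> \<sigma> (a * b) = \<sigma> a * \<sigma> b) \<and>
     (\<forall>x. x \<notin> K \<longrightarrow> \<sigma> x = 0)}"

definition totally_real :: "complex set \<Rightarrow> bool" where
  "totally_real K \<longleftrightarrow> (\<forall>\<sigma>\<in>nf_embeddings K. \<forall>x\<in>K. \<sigma> x \<in> \<real>)"

definition nf_trace :: "complex set \<Rightarrow> complex \<Rightarrow> complex" where
  "nf_trace K x = (\<Sum>\<sigma>\<in>nf_embeddings K. \<sigma> x)"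

definition algebraic_integer :: "complex \<Rightarrow> bool" where
  "algebraic_integer x \<longleftrightarrow>
     (\<exists>P :: int poly. lead_coeff P = 1 \<and> poly (map_poly of_int P) x = 0)"

definition nf_O :: "complex set \<Rightarrow> complex set" where
  "nf_O K = {x \<in> K. algebraic_integer x}"

definition nf_codiff :: "complex set \<Rightarrow> complex set" where
  "nf_codiff K = {x \<in> K. \<forall>y\<in>nf_O K. nf_trace K (x * y) \<in> \<int>}"

text \<open>delta generates the different d, i.e. d = delta O, equivalently d^{-1} = delta^{-1} O.\<close>
definition generates_different :: "complex set \<Rightarrow> complex \<Rightarrow> bool" where
  "generates_different K \<delta> \<longleftrightarrow> \<delta> \<in> nf_O K \<and> \<delta> \<noteq> 0 \<and>
     nf_codiff K = {x / \<delta> | x. x \<in> nf_O K}"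

definition nf_ideal :: "complex set \<Rightarrow> complex set \<Rightarrow> bool" where
  "nf_ideal K I \<longleftrightarrow> I \<subseteq> nf_O K \<and> 0 \<in> I \<and>
     (\<forall>a\<in>I. \<forall>b\<in>I. a + b \<in> I) \<and> (\<forall>a\<in>I. \<forall>r\<in>nf_O K. r * a \<in> I)"

definition principal_ideal :: "complex set \<Rightarrow> complex \<Rightarrow> complex set" where
  "principal_ideal K a = {a * x | x. x \<in> nf_O K}"

definition totally_positive :: "complex set \<Rightarrow> complex \<Rightarrow> bool" where
  "totally_positive K a \<longleftrightarrow> a \<in> K \<and>
     (\<forall>\<sigma>\<in>nf_embeddings K. \<sigma> a \<in> \<real> \<and> Re (\<sigma> a) > 0)"

text \<open>Narrow class number 1: every nonzero (integral) ideal is generated by a totally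
positive element (equivalently every fractional ideal lies in P^+).\<close>
definition narrow_class_number_one :: "complex set \<Rightarrow> bool" where
  "narrow_class_number_one K \<longleftrightarrow>
     (\<forall>I. nf_ideal K I \<and> I \<noteq> {0} \<longrightarrow>
        (\<exists>a. totally_positive K a \<and> I = principal_ideal K a))"

definition nf_prime_ideal :: "complex set \<Rightarrow> complex set \<Rightarrow> bool" where
  "nf_prime_ideal K P \<longleftrightarrow> nf_ideal K P \<and> 1 \<notin> P \<and>
     (\<forall>a\<in>nf_O K. \<forall>b\<in>nf_O K. a * b \<in> P \<longrightarrow> a \<in> P \<or> b \<in> P)"

definition nf_prime_elem :: "complex set \<Rightarrow> complex \<Rightarrow> bool" where
  "nf_prime_elem K p \<longleftrightarrow> p \<in> nf_O K \<and> p \<noteq> 0 \<and> nf_prime_ideal K (principal_ideal K p)"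

definition nf_dvd :: "complex set \<Rightarrow> complex \<Rightarrow> complex \<Rightarrow> bool" where
  "nf_dvd K a b \<longleftrightarrow> a \<in> nf_O K \<and> (\<exists>c\<in>nf_O K. b = a * c)"

definition nf_cong :: "complex set \<Rightarrow> complex \<Rightarrow> complex \<Rightarrow> complex \<Rightarrow> bool" where
  "nf_cong K q x y \<longleftrightarrow> (\<exists>c\<in>nf_O K. x - y = q * c)"

definition nf_res :: "complex set \<Rightarrow> complex \<Rightarrow> complex \<Rightarrow> complex set" where
  "nf_res K q x = {y \<in> nf_O K. nf_cong K q y x}"

definition nf_unit_mod :: "complex set \<Rightarrow> complex \<Rightarrow> complex \<Rightarrow> bool" where
  "nf_unit_mod K q x \<longleftrightarrow> x \<in> nf_O K \<and> (\<exists>y\<in>nf_O K. nf_cong K q (x * y) 1)"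

definition nf_residues :: "complex set \<Rightarrow> complex \<Rightarrow> complex set set" where
  "nf_residues K q = {nf_res K q x | x. x \<in> nf_O K}"

definition nf_unit_residues :: "complex set \<Rightarrow> complex \<Rightarrow> complex set set" where
  "nf_unit_residues K q = {nf_res K q x | x. nf_unit_mod K q x}"

definition ideal_norm :: "complex set \<Rightarrow> complex \<Rightarrow> nat" where
  "ideal_norm K p = card (nf_residues K p)"

definition nf_e :: "complex set \<Rightarrow> complex \<Rightarrow> complex" where
  "nf_e K \<nu> = exp (2 * pi * \<i> * nf_trace K \<nu>)"

definition kloosterman :: "complex set \<Rightarrow> complex \<Rightarrow> complex \<Rightarrow> complex \<Rightarrow> complex" where
  "kloosterman K \<nu> \<mu> q =
     (\<Sum>c\<in>nf_unit_residues K q.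
        let x = (SOME x. x \<in> c);
            xi = (SOME y. y \<in> nf_O K \<and> nf_cong K q (x * y) 1)
        in nf_e K ((\<nu> * x + \<mu> * xi) / q))"

end

theory Submission
  imports Defs "HOL-Analysis.Analysis"
begin


lemma algebraic_integer_iff: "algebraic_integer x \<longleftrightarrow> algebraic_int x"
  unfolding algebraic_integer_def algebraic_int_altdef_ipoly by auto

locale kring =
  fixes K :: "complex set"
  assumes subf: "nf_subfield K"
    and O_add: "\<And>a b. a \<in> nf_O K \<Longrightarrow> b \<in> nf_O K \<Longrightarrow> a + b \<in> nf_O K"
    and O_mult: "\<And>a b. a \<in> nf_O K \<Longrightarrow> b \<in> nf_O K \<Longrightarrow> a * b \<in> nf_O K"
begin

abbreviation "Oi \<equiv> nf_O K"

lemma K0: "0 \<in> K" and K1: "1 \<in> K"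
  and Kadd: "a \<in> K \<Longrightarrow> b \<in> K \<Longrightarrow> a + b \<in> K"
  and Kdiff: "a \<in> K \<Longrightarrow> b \<in> K \<Longrightarrow> a - b \<in> K"
  and Kmult: "a \<in> K \<Longrightarrow> b \<in> K \<Longrightarrow> a * b \<in> K"
  using subf unfolding nf_subfield_def by auto

lemma Kinv: "a \<in> K \<Longrightarrow> inverse a \<in> K"
  using subf unfolding nf_subfield_def by (cases "a = 0") auto

lemma Kdiv: "a \<in> K \<Longrightarrow> b \<in> K \<Longrightarrow> a / b \<in> K"
  by (simp add: divide_inverse Kmult Kinv)

lemma Kuminus: "a \<in> K \<Longrightarrow> - a \<in> K"
  using Kdiff[OF K0, of a] by simp

lemma O_K: "a \<in> Oi \<Longrightarrow> a \<in> K"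
  unfolding nf_O_def by auto

lemma K_of_nat: "of_nat n \<in> K"
  by (induction n) (auto intro: Kadd K0 K1)

lemma K_of_int: "of_int z \<in> K"
proof (cases "z \<ge> 0")
  case True
  then show ?thesis using K_of_nat[of "nat z"] by simp
next
  case False
  then show ?thesis using Kuminus[OF K_of_nat[of "nat (-z)"]] by simp
qed

lemma O_of_int: "of_int z \<in> Oi"
  unfolding nf_O_def using K_of_int by (auto simp: algebraic_integer_iff)

lemma O0: "0 \<in> Oi" and O1: "1 \<in> Oi"
  using O_of_int[of 0] O_of_int[of 1] by auto

lemma O_uminus: "a \<in> Oi \<Longrightarrow> - a \<in> Oi"
  unfolding nf_O_def by (auto simp: algebraic_integer_iff Kuminus)

lemma O_diff: "a \<in> Oi \<Longrightarrow> b \<in> Oi \<Longrightarrow> a - b \<in> Oi"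
  using O_add[OF _ O_uminus, of a b] by simp

lemma O_power: "a \<in> Oi \<Longrightarrow> a ^ n \<in> Oi"
  by (induction n) (auto intro: O_mult O1)

lemma O_sum: "(\<And>i. i \<in> A \<Longrightarrow> f i \<in> Oi) \<Longrightarrow> sum f A \<in> Oi"
  by (induction A rule: infinite_finite_induct) (auto intro: O_add O0)

abbreviation "cg q x y \<equiv> nf_cong K q x y"

lemma cg_refl: "cg q x x"
  unfolding nf_cong_def using O0 by (intro bexI[of _ 0]) auto

lemma cg_sym: "cg q x y \<Longrightarrow> cg q y x"
  unfolding nf_cong_def using O_uminus by (metis minus_diff_eq mult_minus_right)

lemma cg_trans: "cg q x y \<Longrightarrow> cg q y z \<Longrightarrow> cg q x z"
  unfolding nf_cong_def
proof (elim bexE)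
  fix c d assume "c \<in> Oi" "d \<in> Oi" "x - y = q * c" "y - z = q * d"
  then show "\<exists>e\<in>Oi. x - z = q * e"
    by (intro bexI[of _ "c + d"]) (auto simp: algebra_simps O_add)
qed

lemma cg_add: "cg q x y \<Longrightarrow> cg q x' y' \<Longrightarrow> cg q (x + x') (y + y')"
  unfolding nf_cong_def
proof (elim bexE)
  fix c d assume "c \<in> Oi" "d \<in> Oi" "x - y = q * c" "x' - y' = q * d"
  then show "\<exists>e\<in>Oi. x + x' - (y + y') = q * e"
    by (intro bexI[of _ "c + d"]) (auto simp: algebra_simps O_add)
qed

lemma cg_diff: "cg q x y \<Longrightarrow> cg q x' y' \<Longrightarrow> cg q (x - x') (y - y')"
  unfolding nf_cong_def
proof (elim bexE)
  fix c d assume "c \<in> Oi" "d \<in> Oi" "x - y = q * c" "x' - y' = q * d"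
  then show "\<exists>e\<in>Oi. x - x' - (y - y') = q * e"
    by (intro bexI[of _ "c - d"]) (auto simp: algebra_simps O_diff)
qed

lemma cg_mult_left: "z \<in> Oi \<Longrightarrow> cg q x y \<Longrightarrow> cg q (z * x) (z * y)"
  unfolding nf_cong_def
proof (elim bexE)
  fix c assume "z \<in> Oi" "c \<in> Oi" "x - y = q * c"
  then show "\<exists>e\<in>Oi. z * x - z * y = q * e"
    by (intro bexI[of _ "z * c"]) (auto simp: algebra_simps O_mult)
qed

lemma cg_mult: "x \<in> Oi \<Longrightarrow> y' \<in> Oi \<Longrightarrow> cg q x y \<Longrightarrow> cg q x' y' \<Longrightarrow> cg q (x * x') (y * y')"
proof -
  assume a: "x \<in> Oi" "y' \<in> Oi" "cg q x y" "cg q x' y'"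
  have "cg q (x * x') (x * y')" using cg_mult_left a by blast
  moreover have "cg q (y' * x) (y' * y)" using cg_mult_left a by blast
  ultimately show ?thesis by (metis cg_trans mult.commute)
qed

lemma cg_power: "x \<in> Oi \<Longrightarrow> y \<in> Oi \<Longrightarrow> cg q x y \<Longrightarrow> cg q (x ^ n) (y ^ n)"
  by (induction n) (auto intro: cg_refl cg_mult O_power)

lemma cg_divisor: "q = p * q1 \<Longrightarrow> p \<in> Oi \<Longrightarrow> cg q x y \<Longrightarrow> cg q1 x y"
  unfolding nf_cong_def
proof (elim bexE)
  fix c assume "q = p * q1" "p \<in> Oi" "c \<in> Oi" "x - y = q * c"
  then show "\<exists>e\<in>Oi. x - y = q1 * e"
    by (intro bexI[of _ "p * c"]) (auto simp: algebra_simps O_mult)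
qed

lemma cg_0_iff: "cg q x 0 \<longleftrightarrow> (\<exists>c\<in>Oi. x = q * c)"
  unfolding nf_cong_def by simp

lemma cg_multiple: "c \<in> Oi \<Longrightarrow> cg q (x + q * c) x"
  unfolding nf_cong_def by auto

abbreviation "rs q x \<equiv> nf_res K q x"

lemma rs_mem: "x \<in> Oi \<Longrightarrow> x \<in> rs q x"
  unfolding nf_res_def using cg_refl by auto

lemma in_rs: "z \<in> rs q x \<longleftrightarrow> z \<in> Oi \<and> cg q z x"
  unfolding nf_res_def by auto

lemma rs_eq_iff: "x \<in> Oi \<Longrightarrow> y \<in> Oi \<Longrightarrow> rs q x = rs q y \<longleftrightarrow> cg q x y"
  unfolding nf_res_def
  by (auto intro: cg_trans cg_sym cg_refl)

definition rep :: "complex set \<Rightarrow> complex" where "rep c = (SOME x. x \<in> c)"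

lemma rep_rs: assumes "x \<in> Oi" shows "rep (rs q x) \<in> Oi" "cg q (rep (rs q x)) x"
  "rs q (rep (rs q x)) = rs q x"
proof -
  have "rep (rs q x) \<in> rs q x" unfolding rep_def using rs_mem[OF assms] by (rule someI)
  then show "rep (rs q x) \<in> Oi" "cg q (rep (rs q x)) x" by (auto simp: in_rs)
  then show "rs q (rep (rs q x)) = rs q x" using rs_eq_iff assms by blast
qed

abbreviation "unit_mod q x \<equiv> nf_unit_mod K q x"

lemma unit_mod_def': "unit_mod q x \<longleftrightarrow> x \<in> Oi \<and> (\<exists>y\<in>Oi. cg q (x * y) 1)"
  unfolding nf_unit_mod_def by simp

definition minv :: "complex \<Rightarrow> complex \<Rightarrow> complex" where
  "minv q x = (SOME y. y \<in> Oi \<and> cg q (x * y) 1)"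

lemma minv: assumes "unit_mod q x" shows "minv q x \<in> Oi" "cg q (x * minv q x) 1"
proof -
  have "\<exists>y. y \<in> Oi \<and> cg q (x * y) 1" using assms unfolding unit_mod_def' by auto
  then have "minv q x \<in> Oi \<and> cg q (x * minv q x) 1" unfolding minv_def by (rule someI_ex)
  then show "minv q x \<in> Oi" "cg q (x * minv q x) 1" by auto
qed

lemma minv_unique: assumes "x \<in> Oi" "x' \<in> Oi" "y \<in> Oi" "y' \<in> Oi" "cg q x x'"
  "cg q (x * y) 1" "cg q (x' * y') 1"
shows "cg q y y'"
proof -
  have "cg q (y * (x' * y')) (y * 1)" using cg_mult_left assms by blast
  moreover have "cg q ((x * y) * y') (1 * y')" using cg_mult assms
    by (metis O_mult cg_refl mult.commute)
  moreover have "cg q (x * y * y') (x' * y * y')"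
    using cg_mult[OF assms(1) _ assms(5), of "y*y'" "y*y'"] assms cg_refl O_mult
    by (simp add: mult.assoc)
  ultimately show ?thesis
    by (smt (verit, ccfv_SIG) cg_sym cg_trans mult.assoc mult.commute mult_1_right mult_1_left)
qed

lemma unit_mod_cong: "unit_mod q x \<Longrightarrow> x' \<in> Oi \<Longrightarrow> cg q x' x \<Longrightarrow> unit_mod q x'"
  unfolding unit_mod_def'
  by (metis cg_mult cg_refl cg_trans)

lemma unit_mod_mult: "unit_mod q x \<Longrightarrow> unit_mod q y \<Longrightarrow> unit_mod q (x * y)"
proof -
  assume a: "unit_mod q x" "unit_mod q y"
  then obtain x' y' where "x' \<in> Oi" "y' \<in> Oi" "cg q (x * x') 1" "cg q (y * y') 1" "x \<in> Oi" "y \<in> Oi"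
    unfolding unit_mod_def' by auto
  then have "cg q ((x * x') * (y * y')) (1 * 1)" by (intro cg_mult) (auto intro: O_mult O1)
  then show ?thesis unfolding unit_mod_def' using \<open>x' \<in> Oi\<close> \<open>y' \<in> Oi\<close> \<open>x \<in> Oi\<close> \<open>y \<in> Oi\<close>
    by (intro conjI O_mult bexI[of _ "x' * y'"]) (auto simp: algebra_simps)
qed

lemma unit_mod_1: "unit_mod q 1"
  unfolding unit_mod_def' using O1 cg_refl by (intro conjI bexI[of _ 1]) auto

lemma unit_mod_power: "unit_mod q x \<Longrightarrow> unit_mod q (x ^ n)"
  by (induction n) (auto intro: unit_mod_mult unit_mod_1)

lemma unit_mod_divisor: "q = p * q1 \<Longrightarrow> p \<in> Oi \<Longrightarrow> unit_mod q x \<Longrightarrow> unit_mod q1 x"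
  unfolding unit_mod_def' using cg_divisor by blast

abbreviation "tr \<equiv> nf_trace K"
abbreviation "ee \<equiv> nf_e K"

lemma tr_add: "a \<in> K \<Longrightarrow> b \<in> K \<Longrightarrow> tr (a + b) = tr a + tr b"
  unfolding nf_trace_def
  by (subst sum.distrib[symmetric], rule sum.cong) (auto simp: nf_embeddings_def)

lemma e_add: "a \<in> K \<Longrightarrow> b \<in> K \<Longrightarrow> ee (a + b) = ee a * ee b"
  unfolding nf_e_def by (simp add: tr_add distrib_left exp_add)

lemma e_int: assumes "tr w \<in> \<int>" shows "ee w = 1"
proof -
  obtain n where n: "tr w = of_int n" using assms Ints_cases by blast
  have "ee w = exp (0 + \<i> * (of_int n * (of_real pi * 2)))"
    unfolding nf_e_def n by (simp add: algebra_simps)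
  also have "\<dots> = 1" by (subst exp_plus_2pin) simp
  finally show ?thesis .
qed

lemma e_one_imp: assumes "ee w = 1" shows "tr w \<in> \<int>"
proof -
  have "exp (2 * pi * \<i> * tr w) = 1" using assms unfolding nf_e_def .
  then obtain n :: int where h: "Re (2 * pi * \<i> * tr w) = 0" "Im (2 * pi * \<i> * tr w) = of_int (2 * n) * pi"
    unfolding exp_eq_1 by blast
  have "Im (tr w) = 0" using h(1) by simp
  moreover have "Re (tr w) = of_int n" using h(2) by simp
  ultimately have "tr w = of_int n" by (simp add: complex_eq_iff)
  then show ?thesis by simp
qed

abbreviation "cd \<equiv> nf_codiff K"

lemma cd_K: "\<nu> \<in> cd \<Longrightarrow> \<nu> \<in> K"
  unfolding nf_codiff_def by auto

lemma cd_tr: "\<nu> \<in> cd \<Longrightarrow> c \<in> Oi \<Longrightarrow> tr (\<nu> * c) \<in> \<int>"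
  unfolding nf_codiff_def by auto

lemma cd_mult: "\<nu> \<in> cd \<Longrightarrow> c \<in> Oi \<Longrightarrow> \<nu> * c \<in> cd"
  unfolding nf_codiff_def by (auto simp: mult.assoc O_mult Kmult O_K)

lemma e_per: "z \<in> K \<Longrightarrow> \<nu> \<in> cd \<Longrightarrow> c \<in> Oi \<Longrightarrow> ee (z + \<nu> * c) = ee z"
  by (simp add: e_add Kmult cd_K O_K e_int cd_tr)

lemma e_per2: assumes "\<nu> \<in> cd" "\<mu> \<in> cd" "q \<in> Oi" "q \<noteq> 0" "a' \<in> Oi" "b' \<in> Oi"
  "cg q a a'" "cg q b b'"
  shows "ee ((\<nu> * a + \<mu> * b) / q) = ee ((\<nu> * a' + \<mu> * b') / q)"
proof -
  obtain c d where cd: "c \<in> Oi" "d \<in> Oi" "a - a' = q * c" "b - b' = q * d"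
    using assms(7,8) unfolding nf_cong_def by auto
  have "(\<nu> * a + \<mu> * b) / q = ((\<nu> * a' + \<mu> * b') / q + \<nu> * c) + \<mu> * d"
    using cd assms(4) by (simp add: field_simps)
  moreover have "(\<nu> * a' + \<mu> * b') / q \<in> K"
    using assms by (intro Kdiv Kadd Kmult O_K cd_K) auto
  ultimately show ?thesis using assms cd
    by (simp add: e_per Kadd Kmult cd_K O_K)
qed

lemma e_per1: assumes "\<nu> \<in> cd" "q \<in> Oi" "q \<noteq> 0" "a' \<in> Oi" "cg q a a'"
  shows "ee (\<nu> * a / q) = ee (\<nu> * a' / q)"
  using e_per2[OF assms(1) assms(1) assms(2,3,4) O0 assms(5) cg_refl[of q 0]] by simp

lemma O_alg: "a \<in> Oi \<Longrightarrow> \<exists>P :: int poly. lead_coeff P = 1 \<and> poly (map_poly of_int P) a = 0"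
  unfolding nf_O_def algebraic_integer_def by auto

lemma poly_int_O: "x \<in> Oi \<Longrightarrow> poly (map_poly (of_int :: int \<Rightarrow> complex) P) x \<in> Oi"
proof (induction P rule: pCons_induct)
  case 0
  then show ?case using O0 by simp
next
  case (pCons c P)
  then show ?case by (simp add: map_poly_pCons O_add O_mult O_of_int)
qed

lemma int_multiple:
  assumes "p \<in> Oi" "p \<noteq> 0"
  shows "P \<noteq> 0 \<Longrightarrow> poly (map_poly (of_int :: int \<Rightarrow> complex) P) p = 0 \<Longrightarrow> \<exists>N::int. N \<noteq> 0 \<and> cg p (of_int N) 0"
proof (induction P rule: pCons_induct)
  case 0
  then show ?case by simp
next
  case (pCons c P)
  have eq: "of_int c + p * poly (map_poly of_int P) p = 0"
    using pCons.prems by (simp add: map_poly_pCons)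
  show ?case
  proof (cases "c = 0")
    case False
    have "of_int c - 0 = p * (- poly (map_poly of_int P) p)" using eq by (simp add: eq_neg_iff_add_eq_0)
    then have "cg p (of_int c) 0" unfolding nf_cong_def
      using poly_int_O[OF assms(1)] O_uminus by blast
    then show ?thesis using False by blast
  next
    case True
    then have "P \<noteq> 0" using pCons.hyps by auto
    moreover have "poly (map_poly of_int P) p = 0" using eq True assms(2) by simp
    ultimately show ?thesis using pCons.IH by blast
  qed
qed

lemma pow_repr:
  assumes "a \<in> Oi"
  shows "\<exists>n. \<forall>k. \<exists>z::nat \<Rightarrow> int. a ^ k = (\<Sum>i<n. of_int (z i) * a ^ i)"
proof -
  obtain P :: "int poly" where P: "lead_coeff P = 1" "poly (map_poly of_int P) a = 0"
    using O_alg[OF assms] by blast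
  define n where "n = degree P"
  define c where "c = coeff P"
  have deg: "degree (map_poly (of_int :: int \<Rightarrow> complex) P) = n"
    unfolding n_def by (rule degree_map_poly) simp
  have "0 = (\<Sum>i\<le>n. of_int (c i) * a ^ i)"
    using P(2) unfolding poly_altdef deg by (simp add: coeff_map_poly c_def)
  also have "\<dots> = (\<Sum>i<n. of_int (c i) * a ^ i) + a ^ n"
    using P(1) by (simp add: lessThan_Suc_atMost[symmetric] c_def n_def)
  finally have an: "a ^ n = - (\<Sum>i<n. of_int (c i) * a ^ i)" by (simp add: eq_neg_iff_add_eq_0 add.commute)
  have npos: "n > 0"
  proof (rule ccontr)
    assume "\<not> n > 0"
    then have "n = 0" by simp
    then show False using an by simp
  qed
  then obtain m where m: "n = Suc m" using gr0_implies_Suc by blast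
  have "\<exists>z::nat \<Rightarrow> int. a ^ k = (\<Sum>i<n. of_int (z i) * a ^ i)" for k
  proof (induction k)
    case 0
    have "(\<Sum>i<n. of_int ((\<lambda>i. if i = 0 then 1 else 0) i) * a ^ i) = (\<Sum>i<n. if i = 0 then 1 else (0::complex))"
      by (rule sum.cong) auto
    also have "\<dots> = 1" using npos by (simp add: sum.delta)
    finally show ?case by (metis power_0)
  next
    case (Suc k)
    then obtain z where z: "a ^ k = (\<Sum>i<n. of_int (z i) * a ^ i)" by blast
    define z' where "z' = (\<lambda>i. (if i = 0 then 0 else z (i - 1)) - z m * c i)"
    have "a ^ Suc k = (\<Sum>i<n. of_int (z i) * a ^ Suc i)"
      using z by (simp add: sum_distrib_left algebra_simps)
    also have "\<dots> = (\<Sum>i<m. of_int (z i) * a ^ Suc i) + of_int (z m) * a ^ n"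
      unfolding m by simp
    also have "(\<Sum>i<m. of_int (z i) * a ^ Suc i) = (\<Sum>i<n. (if i = 0 then 0 else of_int (z (i - 1))) * a ^ i)"
      unfolding m sum.lessThan_Suc_shift by simp
    also have "of_int (z m) * a ^ n = (\<Sum>i<n. - (of_int (z m * c i)) * a ^ i)"
      unfolding an by (simp add: sum_distrib_left sum_negf algebra_simps)
    also have "(\<Sum>i<n. (if i = 0 then 0 else of_int (z (i - 1))) * a ^ i) + (\<Sum>i<n. - (of_int (z m * c i)) * a ^ i)
        = (\<Sum>i<n. of_int (z' i) * a ^ i)"
      unfolding z'_def sum.distrib[symmetric] by (rule sum.cong) (auto simp: algebra_simps)
    finally show ?case by blast
  qed
  then show ?thesis by blast
qed

lemma field_mod_p:
  assumes p: "p \<in> Oi" "p \<noteq> 0"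
    and prime: "\<And>a b. a \<in> Oi \<Longrightarrow> b \<in> Oi \<Longrightarrow> cg p (a * b) 0 \<Longrightarrow> cg p a 0 \<or> cg p b 0"
    and a: "a \<in> Oi" "\<not> cg p a 0"
  shows "\<exists>b\<in>Oi. cg p (a * b) 1"
proof -
  obtain P :: "int poly" where P: "lead_coeff P = 1" "poly (map_poly of_int P) p = 0"
    using O_alg[OF p(1)] by blast
  have "P \<noteq> 0" using P(1) by auto
  then obtain N :: int where N: "N \<noteq> 0" "cg p (of_int N) 0"
    using int_multiple[OF p _ P(2)] by blast
  obtain n where n: "\<And>k. \<exists>z::nat \<Rightarrow> int. a ^ k = (\<Sum>i<n. of_int (z i) * a ^ i)"
    using pow_repr[OF a(1)] by blast
  define W where "W = (\<lambda>z::nat \<Rightarrow> int. (\<lambda>i. z i mod N)) ` {z. \<forall>i. True}"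
  define W where "W = {ws :: int list. set ws \<subseteq> {0..<\<bar>N\<bar>} \<and> length ws = n}"
  define val where "val ws = (\<Sum>i<n. of_int (ws ! i) * a ^ i)" for ws
  have finW: "finite W" unfolding W_def
    by (rule finite_lists_length_eq) simp
  have red: "\<exists>w\<in>W. cg p (a ^ k) (val w)" for k
  proof -
    obtain z where z: "a ^ k = (\<Sum>i<n. of_int (z i) * a ^ i)" using n by blast
    define w where "w = map (\<lambda>i. z i mod \<bar>N\<bar>) [0..<n]"
    have "w \<in> W" unfolding w_def W_def using N(1) by (auto simp: pos_mod_sign pos_mod_bound)
    obtain e where e: "e \<in> Oi" "of_int N = p * e" using N(2) unfolding nf_cong_def by auto
    have "a ^ k - val w = (\<Sum>i<n. of_int (z i - z i mod \<bar>N\<bar>) * a ^ i)"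
      unfolding z val_def w_def sum_subtractf[symmetric] by (rule sum.cong) (auto simp: algebra_simps)
    also have "\<dots> = (\<Sum>i<n. of_int (\<bar>N\<bar> * (z i div \<bar>N\<bar>)) * a ^ i)"
      by (rule sum.cong) (auto simp: minus_mod_eq_mult_div)
    also have "\<dots> = of_int \<bar>N\<bar> * (\<Sum>i<n. of_int (z i div \<bar>N\<bar>) * a ^ i)"
      by (simp add: sum_distrib_left algebra_simps)
    also have "of_int \<bar>N\<bar> = p * (of_int (sgn N) * e)"
    proof -
      have "\<bar>N\<bar> = sgn N * N" by (cases N rule: linorder_cases[of _ 0]) auto
      then have "(of_int \<bar>N\<bar> :: complex) = of_int (sgn N) * of_int N" by (metis of_int_mult)
      then show ?thesis using e by simp
    qed
    finally have "a ^ k - val w = p * (of_int (sgn N) * e * (\<Sum>i<n. of_int (z i div \<bar>N\<bar>) * a ^ i))"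
      by (simp add: algebra_simps)
    moreover have "of_int (sgn N) * e * (\<Sum>i<n. of_int (z i div \<bar>N\<bar>) * a ^ i) \<in> Oi"
      using e a by (intro O_mult O_of_int O_sum O_power) auto
    ultimately have "cg p (a ^ k) (val w)" unfolding nf_cong_def by blast
    then show ?thesis using \<open>w \<in> W\<close> by blast
  qed
  define f where "f k = (SOME w. w \<in> W \<and> cg p (a ^ k) (val w))" for k
  have f: "f k \<in> W \<and> cg p (a ^ k) (val (f k))" for k
  proof -
    have "\<exists>w. w \<in> W \<and> cg p (a ^ k) (val w)" using red[of k] by blast
    then show ?thesis unfolding f_def by (rule someI_ex)
  qed
  have "\<not> inj f"
  proof
    assume "inj f"
    have "range f \<subseteq> W" using f by auto
    then have "finite (range f)" using finW finite_subset by blast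
    then have "finite (UNIV :: nat set)" using finite_imageD[of f UNIV] \<open>inj f\<close> by blast
    then show False by simp
  qed
  then obtain i j where ij: "f i = f j" "i \<noteq> j" unfolding inj_def by auto
  have gen: "\<exists>b\<in>Oi. cg p (a * b) 1" if "i < j" "cg p (a ^ i) (a ^ j)" for i j
  proof -
    have nz: "\<not> cg p (a ^ k) 0" for k
    proof (induction k)
      case 0
      show ?case
      proof
        assume "cg p (a ^ 0) 0"
        then have "cg p 1 0" by simp
        then have "cg p (a * 1) (a * 0)" using cg_mult_left[OF a(1)] by blast
        then show False using a(2) by simp
      qed
    next
      case (Suc k)
      show ?case
      proof
        assume "cg p (a ^ Suc k) 0"
        then have "cg p (a * a ^ k) 0" by simp
        then have "cg p a 0 \<or> cg p (a ^ k) 0" using prime[OF a(1) O_power[OF a(1), of k]] by blast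
        then show False using a(2) Suc.IH by blast
      qed
    qed
    have "cg p (a ^ j - a ^ i) 0" using cg_diff[OF cg_sym[OF that(2)] cg_refl[of p "a ^ i"]] by simp
    moreover have "a ^ j - a ^ i = a ^ i * (a ^ (j - i) - 1)"
    proof -
      have "a ^ j = a ^ i * a ^ (j - i)" using that(1) by (metis le_add_diff_inverse less_imp_le power_add)
      then show ?thesis by (simp add: right_diff_distrib)
    qed
    ultimately have "cg p (a ^ i * (a ^ (j - i) - 1)) 0" by simp
    then have "cg p (a ^ (j - i) - 1) 0"
      using prime[OF O_power[OF a(1)] O_diff[OF O_power[OF a(1)] O1]] nz by blast
    then have "cg p (a ^ (j - i) - 1 + 1) (0 + 1)" using cg_add[OF _ cg_refl[of p 1]] by blast
    then have "cg p (a ^ (j - i)) 1" by simp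
    moreover have "a ^ (j - i) = a * a ^ (j - i - 1)"
    proof -
      have "j - i = Suc (j - i - 1)" using that(1) by simp
      then show ?thesis by (metis power_Suc)
    qed
    ultimately show ?thesis using O_power[OF a(1)] by auto
  qed
  have "cg p (a ^ i) (a ^ j)"
    using f[of i] f[of j] ij(1) by (metis cg_sym cg_trans)
  show ?thesis
  proof (cases "i < j")
    case True
    then show ?thesis using gen \<open>cg p (a ^ i) (a ^ j)\<close> by blast
  next
    case False
    then have "j < i" using ij(2) by simp
    then show ?thesis using gen[of j i] \<open>cg p (a ^ i) (a ^ j)\<close> cg_sym by blast
  qed
qed

end


locale kfib = kring +
  fixes p q q1 :: complex
  assumes p_O: "p \<in> Oi" and p_nz: "p \<noteq> 0"
    and prime: "\<And>a b. a \<in> Oi \<Longrightarrow> b \<in> Oi \<Longrightarrow> cg p (a * b) 0 \<Longrightarrow> cg p a 0 \<or> cg p b 0"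
    and one_np: "\<not> cg p 1 0"
    and q1_O: "q1 \<in> Oi" and q1_nz: "q1 \<noteq> 0" and q_eq: "q = p * q1"
begin

abbreviation "UR r \<equiv> nf_unit_residues K r"
abbreviation "RR \<equiv> nf_residues K p"

lemma q_O: "q \<in> Oi" using q_eq O_mult p_O q1_O by simp
lemma q_nz: "q \<noteq> 0" using q_eq p_nz q1_nz by simp

lemma UR_iff: "c \<in> UR r \<longleftrightarrow> (\<exists>x. unit_mod r x \<and> c = rs r x)"
  unfolding nf_unit_residues_def by auto

lemma UR_rep: assumes "c \<in> UR r"
  shows "rep c \<in> Oi" "unit_mod r (rep c)" "rs r (rep c) = c"
proof -
  obtain x where x: "unit_mod r x" "c = rs r x" using assms UR_iff by blast
  have xO: "x \<in> Oi" using x unfolding unit_mod_def' by auto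
  show "rep c \<in> Oi" "rs r (rep c) = c" using rep_rs[OF xO] x by auto
  show "unit_mod r (rep c)" using rep_rs[OF xO] x unit_mod_cong by auto
qed

lemma UR_I: "unit_mod r x \<Longrightarrow> rs r x \<in> UR r"
  using UR_iff by blast

lemma RR_iff: "c \<in> RR \<longleftrightarrow> (\<exists>x\<in>Oi. c = rs p x)"
  unfolding nf_residues_def by auto

lemma RR_rep: assumes "c \<in> RR" shows "rep c \<in> Oi" "rs p (rep c) = c"
  using assms rep_rs unfolding RR_iff by auto

lemma rep_cg: "x \<in> Oi \<Longrightarrow> cg r (rep (rs r x)) x"
  using rep_rs by blast

definition pi :: "complex set \<Rightarrow> complex set" where "pi c = rs q1 (rep c)"

lemma unit_q_q1: "unit_mod q x \<Longrightarrow> unit_mod q1 x"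
  using unit_mod_divisor[OF q_eq p_O] .

lemma unit_q_p: "unit_mod q x \<Longrightarrow> unit_mod p x"
  using unit_mod_divisor[of q q1 p] q_eq q1_O by (simp add: mult.commute)

lemma pi_in: "c \<in> UR q \<Longrightarrow> pi c \<in> UR q1"
  unfolding pi_def using UR_rep unit_q_q1 UR_I by blast

definition fib :: "complex set \<Rightarrow> complex set set" where "fib d = {c \<in> UR q. pi c = d}"

definition tau :: "complex set \<Rightarrow> complex set \<Rightarrow> complex set" where
  "tau d r = rs q (rep d + q1 * rep r)"

lemma cg_q_q1: "cg q x y \<Longrightarrow> cg q1 x y"
  using cg_divisor[OF q_eq p_O] .

lemma cg_q_p: "cg q x y \<Longrightarrow> cg p x y"
  using cg_divisor[of q q1 p] q_eq q1_O by (simp add: mult.commute)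

lemma fib_cg: assumes "d \<in> UR q1" "c \<in> fib d" shows "cg q1 (rep c) (rep d)"
proof -
  have c: "c \<in> UR q" "rs q1 (rep c) = d" using assms(2) unfolding fib_def pi_def by auto
  have "rs q1 (rep c) = rs q1 (rep d)" using c UR_rep(3)[OF assms(1)] by simp
  then show ?thesis using rs_eq_iff UR_rep(1) c(1) assms(1) by blast
qed

lemma tau_inj: assumes "d \<in> UR q1" shows "inj_on (tau d) RR"
proof (rule inj_onI)
  fix r r' assume r: "r \<in> RR" "r' \<in> RR" "tau d r = tau d r'"
  have O: "rep d \<in> Oi" "rep r \<in> Oi" "rep r' \<in> Oi" using UR_rep assms RR_rep r by auto
  have O2: "rep d + q1 * rep r \<in> Oi" "rep d + q1 * rep r' \<in> Oi"
    using O q1_O by (auto intro!: O_add O_mult)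
  have "cg q (rep d + q1 * rep r) (rep d + q1 * rep r')"
    using r(3) unfolding tau_def using rs_eq_iff[OF O2] by simp
  then obtain c where c: "c \<in> Oi" "rep d + q1 * rep r - (rep d + q1 * rep r') = q * c"
    unfolding nf_cong_def by blast
  then have "q1 * (rep r - rep r') = q1 * (p * c)" unfolding q_eq by (simp add: right_diff_distrib mult.assoc mult.left_commute)
  then have "rep r - rep r' = p * c" using q1_nz by simp
  then have "cg p (rep r) (rep r')" unfolding nf_cong_def using c by blast
  then have "rs p (rep r) = rs p (rep r')" using rs_eq_iff[OF O(2) O(3)] by blast
  then show "r = r'" using RR_rep(2) r(1,2) by simp
qed

lemma fib_sub: assumes "d \<in> UR q1" shows "fib d \<subseteq> tau d ` RR"
proof
  fix c assume c: "c \<in> fib d"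
  have cU: "c \<in> UR q" using c fib_def by auto
  obtain t where t: "t \<in> Oi" "rep c - rep d = q1 * t"
    using fib_cg[OF assms c] unfolding nf_cong_def by blast
  have tr: "cg p (rep (rs p t)) t" using rep_cg t by blast
  then obtain e where e: "e \<in> Oi" "rep (rs p t) - t = p * e" unfolding nf_cong_def by blast
  have "rep d + q1 * rep (rs p t) - rep c = q * e" using t e q_eq by (simp add: algebra_simps)
  then have "cg q (rep d + q1 * rep (rs p t)) (rep c)" unfolding nf_cong_def using e by blast
  moreover have "rep d + q1 * rep (rs p t) \<in> Oi"
    using rep_rs(1)[OF t(1)] UR_rep(1)[OF assms] q1_O by (intro O_add O_mult)
  ultimately have "tau d (rs p t) = rs q (rep c)" unfolding tau_def
    using rs_eq_iff UR_rep(1)[OF cU] by blast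
  also have "\<dots> = c" using UR_rep(3)[OF cU] .
  finally show "c \<in> tau d ` RR" using RR_iff t(1) by blast
qed

lemma tau_fib: assumes "d \<in> UR q1" "r \<in> RR" "unit_mod q (rep d + q1 * rep r)"
  shows "tau d r \<in> fib d"
proof -
  have O: "rep d \<in> Oi" "rep r \<in> Oi" using UR_rep assms RR_rep by auto
  let ?z = "rep d + q1 * rep r"
  have zO: "?z \<in> Oi" using O q1_O O_add O_mult by auto
  have in1: "tau d r \<in> UR q" unfolding tau_def using UR_I assms(3) by blast
  have "cg q (rep (rs q ?z)) ?z" using rep_cg zO by blast
  then have "cg q1 (rep (rs q ?z)) ?z" using cg_q_q1 by blast
  moreover have "cg q1 ?z (rep d)" using cg_multiple[OF O(2), where q=q1 and x="rep d"] by simp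
  ultimately have "cg q1 (rep (rs q ?z)) (rep d)" using cg_trans by blast
  then have "pi (tau d r) = rs q1 (rep d)" unfolding pi_def tau_def
    using rs_eq_iff O rep_rs(1)[OF zO] by blast
  then show ?thesis using in1 UR_rep(3)[OF assms(1)] unfolding fib_def by auto
qed

lemma unitA: assumes "cg p q1 0" "unit_mod q1 z" shows "unit_mod q z"
proof -
  obtain s where s: "s \<in> Oi" "q1 - 0 = p * s" using assms(1) unfolding nf_cong_def by blast
  obtain w where w: "w \<in> Oi" "cg q1 (z * w) 1" "z \<in> Oi" using assms(2) unfolding unit_mod_def' by blast
  obtain c where c: "c \<in> Oi" "z * w - 1 = q1 * c" using w(2) unfolding nf_cong_def by blast
  have "z * (w * (1 - q1 * c)) - 1 = (z * w - 1) - (z * w) * (q1 * c)" by (simp add: algebra_simps)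
  also have "\<dots> = q1 * c - (1 + q1 * c) * (q1 * c)" using c(2) by (simp add: algebra_simps)
  also have "\<dots> = - (q1 * q1 * c * c)" by (simp add: algebra_simps)
  also have "q1 * q1 = q * s" using s q_eq by (simp add: algebra_simps)
  finally have "z * (w * (1 - q1 * c)) - 1 = q * (- (s * c * c))" by (simp add: algebra_simps)
  moreover have "- (s * c * c) \<in> Oi" using s c by (intro O_uminus O_mult) auto
  moreover have "w * (1 - q1 * c) \<in> Oi" using w c q1_O by (intro O_mult O_diff O1) auto
  ultimately show ?thesis unfolding unit_mod_def' nf_cong_def using w(3) by blast
qed

lemma field_p: "a \<in> Oi \<Longrightarrow> \<not> cg p a 0 \<Longrightarrow> \<exists>b\<in>Oi. cg p (a * b) 1"
  using field_mod_p[OF p_O p_nz prime] by blast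

lemma unitB: assumes "\<not> cg p q1 0" "z \<in> Oi"
  shows "unit_mod q z \<longleftrightarrow> unit_mod q1 z \<and> \<not> cg p z 0"
proof
  assume u: "unit_mod q z"
  have "\<not> cg p z 0"
  proof
    assume "cg p z 0"
    then obtain c where c: "c \<in> Oi" "z = p * c" unfolding nf_cong_def by auto
    obtain w where w: "w \<in> Oi" "cg p (z * w) 1" using unit_q_p[OF u] unfolding unit_mod_def' by blast
    obtain e where e: "e \<in> Oi" "z * w - 1 = p * e" using w(2) unfolding nf_cong_def by blast
    have "1 - 0 = p * (c * w - e)" using c(2) e(2) by (simp add: algebra_simps)
    moreover have "c * w - e \<in> Oi" using c w e by (intro O_diff O_mult) auto
    ultimately have "cg p 1 0" unfolding nf_cong_def by blast
    then show False using one_np by simp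
  qed
  then show "unit_mod q1 z \<and> \<not> cg p z 0" using unit_q_q1[OF u] by simp
next
  assume h: "unit_mod q1 z \<and> \<not> cg p z 0"
  obtain a where a: "a \<in> Oi" "cg p (z * a) 1" using field_p[OF assms(2)] h by blast
  obtain b where b: "b \<in> Oi" "cg q1 (z * b) 1" using h unfolding unit_mod_def' by blast
  obtain s where s: "s \<in> Oi" "z * a - 1 = p * s" using a(2) unfolding nf_cong_def by blast
  obtain r where r: "r \<in> Oi" "z * b - 1 = q1 * r" using b(2) unfolding nf_cong_def by blast
  have "z * (a + b - z * a * b) - 1 = - ((z * a - 1) * (z * b - 1))" by (simp add: algebra_simps)
  also have "\<dots> = q * (- (s * r))" using s(2) r(2) q_eq by (simp add: algebra_simps)
  finally have "z * (a + b - z * a * b) - 1 = q * (- (s * r))" .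
  moreover have "- (s * r) \<in> Oi" using s r by (intro O_uminus O_mult) auto
  moreover have "a + b - z * a * b \<in> Oi" using a b assms(2) by (intro O_diff O_add O_mult) auto
  ultimately show "unit_mod q z" unfolding unit_mod_def' nf_cong_def using assms(2) by blast
qed

definition q1i where "q1i = (SOME b. b \<in> Oi \<and> cg p (q1 * b) 1)"

lemma q1i: assumes "\<not> cg p q1 0" shows "q1i \<in> Oi" "cg p (q1 * q1i) 1"
proof -
  have "\<exists>b. b \<in> Oi \<and> cg p (q1 * b) 1" using field_p[OF q1_O assms] by blast
  then have "q1i \<in> Oi \<and> cg p (q1 * q1i) 1" unfolding q1i_def by (rule someI_ex)
  then show "q1i \<in> Oi" "cg p (q1 * q1i) 1" by auto
qed

definition t0 where "t0 d = - rep d * q1i"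
definition r0 where "r0 d = rs p (t0 d)"
definition Rd where "Rd d = (if cg p q1 0 then RR else RR - {r0 d})"

lemma t0_O: "\<not> cg p q1 0 \<Longrightarrow> d \<in> UR q1 \<Longrightarrow> t0 d \<in> Oi"
  unfolding t0_def using q1i UR_rep by (auto intro!: O_mult O_uminus)

lemma r0_RR: "\<not> cg p q1 0 \<Longrightarrow> d \<in> UR q1 \<Longrightarrow> r0 d \<in> RR"
  unfolding r0_def using t0_O RR_iff by blast

lemma keyB: assumes "\<not> cg p q1 0" "d \<in> UR q1" "r \<in> RR"
  shows "cg p (rep d + q1 * rep r) 0 \<longleftrightarrow> r = r0 d"
proof -
  have O: "rep d \<in> Oi" "rep r \<in> Oi" using UR_rep assms RR_rep by auto
  obtain e where e: "e \<in> Oi" "q1 * q1i - 1 = p * e" using q1i[OF assms(1)] unfolding nf_cong_def by blast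
  have "cg p (rep d + q1 * rep r) 0 \<longleftrightarrow> cg p (rep r) (t0 d)"
  proof
    assume "cg p (rep d + q1 * rep r) 0"
    then obtain c where c: "c \<in> Oi" "rep d + q1 * rep r - 0 = p * c" unfolding nf_cong_def by blast
    have "rep r - t0 d = - rep r * (q1 * q1i - 1) + q1i * (rep d + q1 * rep r)"
      unfolding t0_def by (simp add: algebra_simps)
    also have "\<dots> = p * (q1i * c - rep r * e)" using c(2) e(2) by (simp add: algebra_simps)
    finally show "cg p (rep r) (t0 d)" unfolding nf_cong_def
      using c e O q1i[OF assms(1)] by (blast intro: O_diff O_mult)
  next
    assume "cg p (rep r) (t0 d)"
    then obtain c where c: "c \<in> Oi" "rep r - t0 d = p * c" unfolding nf_cong_def by blast
    have "rep d + q1 * rep r - 0 = - rep d * (q1 * q1i - 1) + q1 * (rep r - t0 d)"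
      unfolding t0_def by (simp add: algebra_simps)
    also have "\<dots> = p * (q1 * c - rep d * e)" using c(2) e(2) by (simp add: algebra_simps)
    finally show "cg p (rep d + q1 * rep r) 0" unfolding nf_cong_def
      using c e O q1_O by (blast intro: O_diff O_mult)
  qed
  also have "\<dots> \<longleftrightarrow> rs p (rep r) = rs p (t0 d)"
    using rs_eq_iff[OF O(2) t0_O[OF assms(1,2)]] by simp
  also have "\<dots> \<longleftrightarrow> r = r0 d" unfolding r0_def using RR_rep(2)[OF assms(3)] by simp
  finally show ?thesis .
qed

lemma unit_q1_z: assumes "d \<in> UR q1" "r \<in> RR" shows "unit_mod q1 (rep d + q1 * rep r)"
proof -
  have O: "rep d \<in> Oi" "rep r \<in> Oi" using UR_rep assms RR_rep by auto
  have "cg q1 (rep d + q1 * rep r) (rep d)" using cg_multiple[OF O(2), where q=q1 and x="rep d"] by simp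
  then show ?thesis using unit_mod_cong UR_rep(2)[OF assms(1)] O q1_O O_add O_mult by blast
qed

lemma fib_eq: assumes "d \<in> UR q1" shows "fib d = tau d ` Rd d"
proof
  show "fib d \<subseteq> tau d ` Rd d"
  proof
    fix c assume c: "c \<in> fib d"
    then obtain r where r: "r \<in> RR" "c = tau d r" using fib_sub[OF assms] by blast
    show "c \<in> tau d ` Rd d"
    proof (cases "cg p q1 0")
      case True
      then show ?thesis using r unfolding Rd_def by auto
    next
      case False
      have O: "rep d \<in> Oi" "rep r \<in> Oi" using UR_rep assms RR_rep r by auto
      let ?z = "rep d + q1 * rep r"
      have zO: "?z \<in> Oi" using O q1_O by (auto intro!: O_add O_mult)
      have cU: "c \<in> UR q" using c unfolding fib_def by auto
      have "cg q (rep c) ?z" using r(2) unfolding tau_def using rep_cg[OF zO] by simp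
      then have "unit_mod q ?z" using unit_mod_cong[OF UR_rep(2)[OF cU] zO] cg_sym by blast
      then have "\<not> cg p ?z 0" using unitB[OF False zO] by blast
      then have "r \<noteq> r0 d" using keyB[OF False assms r(1)] by blast
      then show ?thesis using r False unfolding Rd_def by auto
    qed
  qed
next
  show "tau d ` Rd d \<subseteq> fib d"
  proof
    fix c assume "c \<in> tau d ` Rd d"
    then obtain r where r: "r \<in> Rd d" "c = tau d r" by blast
    have rR: "r \<in> RR" using r unfolding Rd_def by (auto split: if_splits)
    have O: "rep d \<in> Oi" "rep r \<in> Oi" using UR_rep assms RR_rep rR by auto
    let ?z = "rep d + q1 * rep r"
    have zO: "?z \<in> Oi" using O q1_O by (auto intro!: O_add O_mult)
    have "unit_mod q ?z"
    proof (cases "cg p q1 0")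
      case True
      then show ?thesis using unitA unit_q1_z[OF assms rR] by blast
    next
      case False
      then have "r \<noteq> r0 d" using r unfolding Rd_def by auto
      then have "\<not> cg p ?z 0" using keyB[OF False assms rR] by blast
      then show ?thesis using unitB[OF False zO] unit_q1_z[OF assms rR] by blast
    qed
    then show "c \<in> fib d" using tau_fib[OF assms rR] r by simp
  qed
qed

lemma Rd_sub: "Rd d \<subseteq> RR" unfolding Rd_def by auto

lemma tau_inj_Rd: "d \<in> UR q1 \<Longrightarrow> inj_on (tau d) (Rd d)"
  using tau_inj inj_on_subset Rd_sub by blast

lemma RR_two: "rs p 0 \<in> RR" "rs p 1 \<in> RR" "rs p 0 \<noteq> rs p 1"
proof -
  show "rs p 0 \<in> RR" "rs p 1 \<in> RR" using RR_iff O0 O1 by auto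
  show "rs p 0 \<noteq> rs p 1" using rs_eq_iff[OF O0 O1] one_np cg_sym by blast
qed

lemma Rd_ne: "d \<in> UR q1 \<Longrightarrow> Rd d \<noteq> {}"
  unfolding Rd_def using RR_two by (cases "cg p q1 0") auto

lemma RR_Rd: "RR \<subseteq> insert (r0 d) (Rd d)"
  unfolding Rd_def by auto

lemma card_fib: assumes "d \<in> UR q1"
  shows "card (fib d) = card (Rd d)"
  using fib_eq[OF assms] card_image[OF tau_inj_Rd[OF assms]] by simp

end


context kfib begin

definition ks :: "complex \<Rightarrow> complex \<Rightarrow> complex \<Rightarrow> complex \<Rightarrow> complex" where
  "ks a b r x = ee ((a * x + b * minv r x) / r)"

lemma klo_eq: "kloosterman K a b r = (\<Sum>c\<in>UR r. ks a b r (rep c))"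
  unfolding kloosterman_def ks_def rep_def minv_def Let_def by simp

lemma char_zero:
  assumes nu: "\<nu> \<in> cd" and dl: "cd = {x / \<delta> | x. x \<in> Oi}" "\<delta> \<noteq> 0"
    and ndvd: "\<not> nf_dvd K p (\<delta> * \<nu>)"
  shows "(\<Sum>r\<in>RR. ee (\<nu> * rep r / p)) = 0"
proof -
  have "\<exists>y\<in>Oi. tr (\<nu> / p * y) \<notin> \<int>"
  proof (rule ccontr)
    assume "\<not> ?thesis"
    then have "\<nu> / p \<in> cd" unfolding nf_codiff_def using Kdiv cd_K[OF nu] O_K[OF p_O] by auto
    then obtain x where x: "x \<in> Oi" "\<nu> / p = x / \<delta>" using dl by auto
    have "\<delta> * \<nu> = p * x" using x(2) p_nz dl(2) by (simp add: field_simps)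
    then have "nf_dvd K p (\<delta> * \<nu>)" unfolding nf_dvd_def using p_O x(1) by blast
    then show False using ndvd by simp
  qed
  then obtain y where y: "y \<in> Oi" "tr (\<nu> / p * y) \<notin> \<int>" by blast
  have ey: "ee (\<nu> * y / p) \<noteq> 1" using e_one_imp y(2) by (metis times_divide_eq_left mult.commute
        divide_divide_eq_left' mult.left_commute times_divide_eq_right)
  define sh where "sh r = rs p (rep r + y)" for r
  define shi where "shi r = rs p (rep r - y)" for r
  let ?g = "\<lambda>r. ee (\<nu> * rep r / p)"
  have P1: "sh a \<in> RR \<and> shi (sh a) = a" if a: "a \<in> RR" for a
  proof -
    have aO: "rep a \<in> Oi" using RR_rep a by auto
    have zO: "rep a + y \<in> Oi" using aO y by (auto intro: O_add)
    have "cg p (rep (sh a) - y) (rep a + y - y)" unfolding sh_def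
      using cg_diff[OF rep_cg[OF zO] cg_refl] by blast
    then have "cg p (rep (sh a) - y) (rep a)" by simp
    moreover have "rep (sh a) - y \<in> Oi" unfolding sh_def using O_diff rep_rs(1)[OF zO] y(1) by blast
    ultimately have "rs p (rep (sh a) - y) = rs p (rep a)" using rs_eq_iff aO by blast
    then show ?thesis unfolding shi_def using RR_rep(2)[OF a] RR_iff zO unfolding sh_def by auto
  qed
  have P2: "shi b \<in> RR \<and> sh (shi b) = b" if b: "b \<in> RR" for b
  proof -
    have bO: "rep b \<in> Oi" using RR_rep b by auto
    have zO: "rep b - y \<in> Oi" using bO y by (auto intro: O_diff)
    have "cg p (rep (shi b) + y) (rep b - y + y)" unfolding shi_def
      using cg_add[OF rep_cg[OF zO] cg_refl] by blast
    then have "cg p (rep (shi b) + y) (rep b)" by simp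
    moreover have "rep (shi b) + y \<in> Oi" unfolding shi_def using O_add rep_rs(1)[OF zO] y(1) by blast
    ultimately have "rs p (rep (shi b) + y) = rs p (rep b)" using rs_eq_iff bO by blast
    then show ?thesis unfolding sh_def using RR_rep(2)[OF b] RR_iff zO unfolding shi_def by auto
  qed
  have "(\<Sum>r\<in>RR. ?g r) = (\<Sum>r\<in>RR. ?g (sh r))"
    by (rule sum.reindex_bij_witness[where i = sh and j = shi]) (use P1 P2 in auto)
  also have "\<dots> = (\<Sum>r\<in>RR. ?g r * ee (\<nu> * y / p))"
  proof (rule sum.cong)
    fix r assume r: "r \<in> RR"
    have rO: "rep r \<in> Oi" using RR_rep r by auto
    have zO: "rep r + y \<in> Oi" using rO y by (auto intro: O_add)
    have "?g (sh r) = ee (\<nu> * (rep r + y) / p)" unfolding sh_def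
      using e_per1[OF nu p_O p_nz zO rep_cg[OF zO]] .
    also have "\<nu> * (rep r + y) / p = \<nu> * rep r / p + \<nu> * y / p" by (simp add: distrib_left add_divide_distrib)
    also have "ee \<dots> = ?g r * ee (\<nu> * y / p)"
      using rO y nu p_O by (intro e_add Kdiv Kmult O_K cd_K) auto
    finally show "?g (sh r) = ?g r * ee (\<nu> * y / p)" .
  qed simp
  also have "\<dots> = (\<Sum>r\<in>RR. ?g r) * ee (\<nu> * y / p)" by (simp add: sum_distrib_right)
  finally have "(\<Sum>r\<in>RR. ?g r) * (1 - ee (\<nu> * y / p)) = 0" by (simp add: algebra_simps)
  then show ?thesis using ey by simp
qed

lemma fib_minv: assumes "d \<in> UR q1" "c \<in> fib d"
  shows "cg q1 (minv q (rep c)) (minv q1 (rep d))"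
proof -
  have cU: "c \<in> UR q" using assms(2) unfolding fib_def by auto
  have x: "rep c \<in> Oi" "unit_mod q (rep c)" using UR_rep[OF cU] by auto
  have y: "rep d \<in> Oi" "unit_mod q1 (rep d)" using UR_rep[OF assms(1)] by auto
  show ?thesis
    using minv_unique[OF x(1) y(1) minv(1)[OF x(2)] minv(1)[OF y(2)] fib_cg[OF assms]
        cg_q_q1[OF minv(2)[OF x(2)]] minv(2)[OF y(2)]] .
qed

lemma P1:
  assumes nu: "\<nu> \<in> cd" and mu: "\<mu> \<in> cd" and m: "m \<ge> 1" and l: "l \<ge> 1"
    and d: "d \<in> UR q1" and c: "c \<in> fib d"
  shows "ks (\<nu> * p ^ m) (\<mu> * p ^ l) q (rep c) = ks (\<nu> * p ^ (m - 1)) (\<mu> * p ^ (l - 1)) q1 (rep d)"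
proof -
  have cU: "c \<in> UR q" using c unfolding fib_def by auto
  have x: "rep c \<in> Oi" "unit_mod q (rep c)" using UR_rep[OF cU] by auto
  have y: "rep d \<in> Oi" "unit_mod q1 (rep d)" using UR_rep[OF d] by auto
  let ?x = "rep c" and ?xb = "minv q (rep c)" and ?y = "rep d" and ?yb = "minv q1 (rep d)"
  have pm: "p ^ m = p * p ^ (m - 1)" "p ^ l = p * p ^ (l - 1)" using m l
    by (metis Suc_diff_le diff_Suc_1 power_Suc)+
  have "(\<nu> * p ^ m * ?x + \<mu> * p ^ l * ?xb) / q = ((\<nu> * p ^ (m - 1)) * ?x + (\<mu> * p ^ (l - 1)) * ?xb) / q1"
    unfolding pm q_eq using p_nz q1_nz by (simp add: field_simps)
  then have "ks (\<nu> * p ^ m) (\<mu> * p ^ l) q ?x = ee (((\<nu> * p ^ (m - 1)) * ?x + (\<mu> * p ^ (l - 1)) * ?xb) / q1)"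
    unfolding ks_def by simp
  also have "\<dots> = ee (((\<nu> * p ^ (m - 1)) * ?y + (\<mu> * p ^ (l - 1)) * ?yb) / q1)"
    by (rule e_per2) (use nu mu p_O q1_O q1_nz y minv(1) fib_cg[OF d c] fib_minv[OF d c] in
        \<open>auto intro: cd_mult O_power\<close>)
  finally show ?thesis unfolding ks_def .
qed

lemma P2:
  assumes nu: "\<nu> \<in> cd" and mu: "\<mu> \<in> cd" and m: "m \<ge> 1"
    and d: "d \<in> UR q1" and c: "c \<in> fib d"
  shows "ks \<nu> (\<mu> * p ^ (m + l)) q (rep c) = ee (\<mu> * p ^ (m + l - 1) * minv q1 (rep d) / q1) * ee (\<nu> * rep c / q)"
proof -
  have cU: "c \<in> UR q" using c unfolding fib_def by auto
  have x: "rep c \<in> Oi" "unit_mod q (rep c)" using UR_rep[OF cU] by auto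
  have y: "rep d \<in> Oi" "unit_mod q1 (rep d)" using UR_rep[OF d] by auto
  let ?x = "rep c" and ?xb = "minv q (rep c)" and ?y = "rep d" and ?yb = "minv q1 (rep d)"
  have pm: "p ^ (m + l) = p * p ^ (m + l - 1)" using m
    by (metis Suc_diff_le diff_Suc_1 power_Suc le_add1 order_trans)
  have xbO: "?xb \<in> Oi" using minv(1)[OF x(2)] .
  have mu': "\<mu> * p ^ (m + l - 1) \<in> cd" using mu p_O by (auto intro: cd_mult O_power)
  have "(\<nu> * ?x + \<mu> * p ^ (m + l) * ?xb) / q = \<nu> * ?x / q + (\<mu> * p ^ (m + l - 1)) * ?xb / q1"
    unfolding pm q_eq using p_nz q1_nz by (simp add: field_simps)
  then have "ks \<nu> (\<mu> * p ^ (m + l)) q ?x = ee (\<nu> * ?x / q + (\<mu> * p ^ (m + l - 1)) * ?xb / q1)"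
    unfolding ks_def by (simp add: mult.assoc)
  also have "\<dots> = ee (\<nu> * ?x / q) * ee ((\<mu> * p ^ (m + l - 1)) * ?xb / q1)"
    using nu mu' x xbO q_O q1_O by (intro e_add Kdiv Kmult O_K cd_K) auto
  also have "ee ((\<mu> * p ^ (m + l - 1)) * ?xb / q1) = ee ((\<mu> * p ^ (m + l - 1)) * ?yb / q1)"
    using e_per1[OF mu' q1_O q1_nz minv(1)[OF y(2)] fib_minv[OF d c]] .
  finally show ?thesis by (simp add: mult.commute)
qed

lemma tau_val: assumes nu: "\<nu> \<in> cd" and d: "d \<in> UR q1" and r: "r \<in> RR"
  shows "ee (\<nu> * rep (tau d r) / q) = ee (\<nu> * rep d / q) * ee (\<nu> * rep r / p)"
proof -
  have O: "rep d \<in> Oi" "rep r \<in> Oi" using UR_rep d RR_rep r by auto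
  let ?z = "rep d + q1 * rep r"
  have zO: "?z \<in> Oi" using O q1_O by (auto intro!: O_add O_mult)
  have "ee (\<nu> * rep (tau d r) / q) = ee (\<nu> * ?z / q)"
    unfolding tau_def using e_per1[OF nu q_O q_nz zO rep_cg[OF zO]] .
  also have "\<nu> * ?z / q = \<nu> * rep d / q + \<nu> * rep r / p"
    unfolding q_eq using p_nz q1_nz by (simp add: field_simps)
  also have "ee \<dots> = ee (\<nu> * rep d / q) * ee (\<nu> * rep r / p)"
    using O nu p_O q_O by (intro e_add Kdiv Kmult O_K cd_K) auto
  finally show ?thesis .
qed

definition uu where "uu = (1 - q1 * q1i) / p"

lemma uu: assumes "\<not> cg p q1 0"
  shows "uu \<in> Oi" "p * uu = 1 - q1 * q1i" "cg q1 (p * uu) 1" "cg q1 (uu * p) 1"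
proof -
  obtain e where e: "e \<in> Oi" "q1 * q1i - 1 = p * e" using q1i[OF assms] unfolding nf_cong_def by blast
  have "uu = - e" unfolding uu_def using e(2) p_nz by (simp add: field_simps)
  then show "uu \<in> Oi" using O_uminus e(1) by simp
  show pu: "p * uu = 1 - q1 * q1i" unfolding uu_def using p_nz by simp
  have "p * uu - 1 = q1 * (- q1i)" using pu by simp
  then show "cg q1 (p * uu) 1" unfolding nf_cong_def using O_uminus q1i(1)[OF assms] by blast
  then show "cg q1 (uu * p) 1" by (simp add: mult.commute)
qed

lemma mulmap:
  assumes w: "w \<in> Oi" "w' \<in> Oi" "cg q1 (w' * w) 1" and d: "d \<in> UR q1"
  shows "rs q1 (w * rep d) \<in> UR q1" "rs q1 (w' * rep (rs q1 (w * rep d))) = d"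
proof -
  have y: "rep d \<in> Oi" "unit_mod q1 (rep d)" using UR_rep[OF d] by auto
  have wu: "unit_mod q1 w" unfolding unit_mod_def' using w by (auto simp: mult.commute)
  show "rs q1 (w * rep d) \<in> UR q1" using UR_I unit_mod_mult[OF wu y(2)] by blast
  have zO: "w * rep d \<in> Oi" using w y O_mult by auto
  have "cg q1 (w' * rep (rs q1 (w * rep d))) (w' * (w * rep d))"
    using cg_mult_left[OF w(2) rep_cg[OF zO]] .
  moreover have "cg q1 ((w' * w) * rep d) (1 * rep d)"
    using cg_mult[OF O_mult[OF w(2) w(1)] y(1) w(3) cg_refl] .
  ultimately have "cg q1 (w' * rep (rs q1 (w * rep d))) (rep d)"
    using cg_trans by (simp add: mult.assoc)
  moreover have "w' * rep (rs q1 (w * rep d)) \<in> Oi" using w(2) rep_rs(1)[OF zO] O_mult by auto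
  ultimately have "rs q1 (w' * rep (rs q1 (w * rep d))) = rs q1 (rep d)" using rs_eq_iff y(1) by blast
  then show "rs q1 (w' * rep (rs q1 (w * rep d))) = d" using UR_rep(3)[OF d] by simp
qed

lemma S1_reindex:
  assumes B: "\<not> cg p q1 0" and nu: "\<nu> \<in> cd" and mu: "\<mu> \<in> cd" and m: "m \<ge> 1" and l: "l \<ge> 1"
  shows "(\<Sum>d\<in>UR q1. ks (\<nu> * p ^ (m - 1)) (\<mu> * p ^ (l - 1)) q1 (rep d)) =
         (\<Sum>d\<in>UR q1. ee ((\<nu> * (uu * rep d) + \<mu> * (p ^ (m + l - 1) * minv q1 (rep d))) / q1))"
proof -
  define beta where "beta d = rs q1 (uu ^ m * rep d)" for d
  define gamma where "gamma d = rs q1 (p ^ m * rep d)" for d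
  have uO: "uu \<in> Oi" using uu(1)[OF B] .
  have pu: "cg q1 ((p * uu) ^ k) 1" for k
    using cg_power[OF O_mult[OF p_O uO] O1 uu(3)[OF B], of k] by simp
  have c1: "cg q1 (p ^ m * uu ^ m) 1" using pu[of m] by (simp add: power_mult_distrib)
  have c2: "cg q1 (uu ^ m * p ^ m) 1" using c1 by (simp add: mult.commute)
  have umO: "uu ^ m \<in> Oi" "p ^ m \<in> Oi" using O_power uO p_O by auto
  note mb = mulmap[OF umO(1) umO(2) c1] and mg = mulmap[OF umO(2) umO(1) c2]
  let ?S = "\<lambda>d. ks (\<nu> * p ^ (m - 1)) (\<mu> * p ^ (l - 1)) q1 (rep d)"
  have "(\<Sum>d\<in>UR q1. ?S d) = (\<Sum>d\<in>UR q1. ?S (beta d))"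
    by (rule sum.reindex_bij_witness[where i = gamma and j = beta, symmetric])
       (use mb mg in \<open>auto simp: beta_def gamma_def\<close>)
  also have "\<dots> = (\<Sum>d\<in>UR q1. ee ((\<nu> * (uu * rep d) + \<mu> * (p ^ (m + l - 1) * minv q1 (rep d))) / q1))"
  proof (rule sum.cong)
    fix d assume d: "d \<in> UR q1"
    have y: "rep d \<in> Oi" "unit_mod q1 (rep d)" using UR_rep[OF d] by auto
    have bd: "beta d \<in> UR q1" unfolding beta_def using mb(1)[OF d] .
    have x: "rep (beta d) \<in> Oi" "unit_mod q1 (rep (beta d))" using UR_rep[OF bd] by auto
    let ?x = "rep (beta d)" and ?xb = "minv q1 (rep (beta d))" and ?y = "rep d" and ?yb = "minv q1 (rep d)"
    have xO: "?xb \<in> Oi" "?yb \<in> Oi" using minv(1) x(2) y(2) by auto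
    have xc: "cg q1 ?x (uu ^ m * ?y)" unfolding beta_def using rep_cg O_mult umO(1) y(1) by blast
    have e1: "uu ^ m = uu ^ (m - 1) * uu" using m by (metis Suc_diff_le diff_Suc_1 power_Suc2)
    have cg1: "cg q1 (p ^ (m - 1) * ?x) (uu * ?y)"
    proof -
      have "cg q1 (p ^ (m - 1) * ?x) (p ^ (m - 1) * (uu ^ m * ?y))"
        using cg_mult_left[OF O_power[OF p_O] xc] .
      moreover have "p ^ (m - 1) * (uu ^ m * ?y) = (p * uu) ^ (m - 1) * (uu * ?y)"
        unfolding e1 by (simp add: power_mult_distrib algebra_simps)
      moreover have "cg q1 ((p * uu) ^ (m - 1) * (uu * ?y)) (1 * (uu * ?y))"
        using cg_mult[OF O_power[OF O_mult[OF p_O uO]] O_mult[OF uO y(1)] pu cg_refl] .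
      ultimately show ?thesis using cg_trans by (metis mult_1_left)
    qed
    have cg2: "cg q1 ?xb (p ^ m * ?yb)"
    proof (rule minv_unique[OF x(1) O_mult[OF umO(1) y(1)] xO(1) O_mult[OF umO(2) xO(2)] xc minv(2)[OF x(2)]])
      have "(uu ^ m * ?y) * (p ^ m * ?yb) = (p * uu) ^ m * (?y * ?yb)"
        by (simp add: power_mult_distrib algebra_simps)
      moreover have "cg q1 ((p * uu) ^ m * (?y * ?yb)) (1 * 1)"
        using cg_mult[OF O_power[OF O_mult[OF p_O uO]] O1 pu minv(2)[OF y(2)]] .
      ultimately show "cg q1 ((uu ^ m * ?y) * (p ^ m * ?yb)) 1" by (metis mult_1_left)
    qed
    have cg3: "cg q1 (p ^ (l - 1) * ?xb) (p ^ (m + l - 1) * ?yb)"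
    proof -
      have "cg q1 (p ^ (l - 1) * ?xb) (p ^ (l - 1) * (p ^ m * ?yb))"
        using cg_mult_left[OF O_power[OF p_O] cg2] .
      moreover have "p ^ (l - 1) * (p ^ m * ?yb) = p ^ (m + l - 1) * ?yb"
      proof -
        have "m + l - 1 = (l - 1) + m" using l by simp
        then have "p ^ (m + l - 1) = p ^ (l - 1) * p ^ m" by (simp add: power_add)
        then show ?thesis by (simp add: mult.assoc)
      qed
      ultimately show ?thesis by metis
    qed
    have "?S (beta d) = ee ((\<nu> * (p ^ (m - 1) * ?x) + \<mu> * (p ^ (l - 1) * ?xb)) / q1)"
      unfolding ks_def by (simp add: mult.assoc)
    also have "\<dots> = ee ((\<nu> * (uu * ?y) + \<mu> * (p ^ (m + l - 1) * ?yb)) / q1)"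
      by (rule e_per2[OF nu mu q1_O q1_nz _ _ cg1 cg3])
         (use uO y(1) xO p_O in \<open>auto intro: O_mult O_power\<close>)
    finally show "?S (beta d) = ee ((\<nu> * (uu * rep d) + \<mu> * (p ^ (m + l - 1) * minv q1 (rep d))) / q1)" .
  qed simp
  finally show ?thesis .
qed

lemma main_kfib:
  assumes nu: "\<nu> \<in> cd" and mu: "\<mu> \<in> cd" and dl: "cd = {x / \<delta> | x. x \<in> Oi}" "\<delta> \<noteq> 0"
    and ndvd: "\<not> nf_dvd K p (\<delta> * \<nu>)" and m: "m \<ge> 1" and l: "l \<ge> 1"
  shows "kloosterman K (\<nu> * p ^ m) (\<mu> * p ^ l) q =
     kloosterman K \<nu> (\<mu> * p ^ (m + l)) q + of_nat (card RR) * kloosterman K (\<nu> * p ^ (m - 1)) (\<mu> * p ^ (l - 1)) q1"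
proof -
  let ?f1 = "\<lambda>c. ks (\<nu> * p ^ m) (\<mu> * p ^ l) q (rep c)"
  let ?f2 = "\<lambda>c. ks \<nu> (\<mu> * p ^ (m + l)) q (rep c)"
  let ?S1s = "\<lambda>d. ks (\<nu> * p ^ (m - 1)) (\<mu> * p ^ (l - 1)) q1 (rep d)"
  let ?A = "\<lambda>d. ee (\<mu> * p ^ (m + l - 1) * minv q1 (rep d) / q1)"
  have cz: "(\<Sum>r\<in>RR. ee (\<nu> * rep r / p)) = 0" using char_zero[OF nu dl ndvd] .
  have "(\<Sum>c\<in>UR q. ?f1 c) = (\<Sum>c\<in>UR q. ?f2 c) + of_nat (card RR) * (\<Sum>d\<in>UR q1. ?S1s d)"
  proof (cases "finite (UR q)")
    case fin: True
    have d0: "rs q1 1 \<in> UR q1" using UR_I unit_mod_1 by blast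
    have "tau (rs q1 1) ` Rd (rs q1 1) \<subseteq> UR q" using fib_eq[OF d0] unfolding fib_def by auto
    then have "finite (tau (rs q1 1) ` Rd (rs q1 1))" using fin finite_subset by blast
    then have "finite (Rd (rs q1 1))" using finite_image_iff tau_inj_Rd[OF d0] by blast
    then have finR: "finite RR" using RR_Rd[of "rs q1 1"] finite_subset by blast
    have "UR q1 \<subseteq> pi ` UR q"
    proof
      fix d assume d: "d \<in> UR q1"
      obtain r where r: "r \<in> Rd d" using Rd_ne[OF d] by blast
      then have "tau d r \<in> fib d" using fib_eq[OF d] by blast
      then show "d \<in> pi ` UR q" unfolding fib_def by force
    qed
    then have fin1: "finite (UR q1)" using fin finite_surj by blast
    have grp: "(\<Sum>c\<in>UR q. g c) = (\<Sum>d\<in>UR q1. \<Sum>c\<in>fib d. g c)" for g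
    proof -
      have "pi ` UR q \<subseteq> UR q1" using pi_in by blast
      from sum.group[OF fin fin1 this, of g] show ?thesis unfolding fib_def by simp
    qed
    have L: "(\<Sum>c\<in>UR q. ?f1 c) = (\<Sum>d\<in>UR q1. of_nat (card (Rd d)) * ?S1s d)"
      unfolding grp
    proof (rule sum.cong)
      fix d assume d: "d \<in> UR q1"
      have "(\<Sum>c\<in>fib d. ?f1 c) = (\<Sum>c\<in>fib d. ?S1s d)"
        using P1[OF nu mu m l d] by (intro sum.cong) auto
      also have "\<dots> = of_nat (card (Rd d)) * ?S1s d" using card_fib[OF d] by simp
      finally show "(\<Sum>c\<in>fib d. ?f1 c) = of_nat (card (Rd d)) * ?S1s d" .
    qed simp
    have S2: "(\<Sum>c\<in>UR q. ?f2 c) = (\<Sum>d\<in>UR q1. ?A d * (ee (\<nu> * rep d / q) * (\<Sum>r\<in>Rd d. ee (\<nu> * rep r / p))))"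
      unfolding grp
    proof (rule sum.cong)
      fix d assume d: "d \<in> UR q1"
      have "(\<Sum>c\<in>fib d. ?f2 c) = (\<Sum>c\<in>fib d. ?A d * ee (\<nu> * rep c / q))"
        using P2[OF nu mu m d] by (intro sum.cong) auto
      also have "\<dots> = ?A d * (\<Sum>c\<in>fib d. ee (\<nu> * rep c / q))" by (simp add: sum_distrib_left)
      also have "(\<Sum>c\<in>fib d. ee (\<nu> * rep c / q)) = (\<Sum>r\<in>Rd d. ee (\<nu> * rep (tau d r) / q))"
        unfolding fib_eq[OF d] using sum.reindex[OF tau_inj_Rd[OF d]] by simp
      also have "\<dots> = (\<Sum>r\<in>Rd d. ee (\<nu> * rep d / q) * ee (\<nu> * rep r / p))"
        using tau_val[OF nu d] Rd_sub by (intro sum.cong) auto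
      also have "\<dots> = ee (\<nu> * rep d / q) * (\<Sum>r\<in>Rd d. ee (\<nu> * rep r / p))" by (simp add: sum_distrib_left)
      finally show "(\<Sum>c\<in>fib d. ?f2 c) = ?A d * (ee (\<nu> * rep d / q) * (\<Sum>r\<in>Rd d. ee (\<nu> * rep r / p)))" .
    qed simp
    show ?thesis
    proof (cases "cg p q1 0")
      case A: True
      have "(\<Sum>c\<in>UR q. ?f2 c) = 0" unfolding S2 Rd_def using A cz by simp
      moreover have "(\<Sum>c\<in>UR q. ?f1 c) = of_nat (card RR) * (\<Sum>d\<in>UR q1. ?S1s d)"
        unfolding L Rd_def using A by (simp add: sum_distrib_left)
      ultimately show ?thesis by simp
    next
      case B: False
      have r0: "d \<in> UR q1 \<Longrightarrow> r0 d \<in> RR" for d using r0_RR[OF B] by blast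
      have "RR \<noteq> {}" using RR_two(1) by blast
      then have cardpos: "card RR \<ge> 1" using finR card_0_eq[OF finR] by linarith
      have cRd: "d \<in> UR q1 \<Longrightarrow> of_nat (card (Rd d)) = (of_nat (card RR) - 1 :: complex)" for d
      proof -
        assume d: "d \<in> UR q1"
        have "card (Rd d) = card RR - 1" unfolding Rd_def using B finR r0[OF d] by (simp add: card_Diff_singleton)
        then show ?thesis using cardpos by (simp add: of_nat_diff)
      qed
      have L2: "(\<Sum>c\<in>UR q. ?f1 c) = (of_nat (card RR) - 1) * (\<Sum>d\<in>UR q1. ?S1s d)"
        unfolding L sum_distrib_left by (rule sum.cong) (simp_all add: cRd)
      have "(\<Sum>c\<in>UR q. ?f2 c) = (\<Sum>d\<in>UR q1. - ee ((\<nu> * (uu * rep d) + \<mu> * (p ^ (m + l - 1) * minv q1 (rep d))) / q1))"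
        unfolding S2
      proof (rule sum.cong)
        fix d assume d: "d \<in> UR q1"
        have y: "rep d \<in> Oi" "unit_mod q1 (rep d)" using UR_rep[OF d] by auto
        have ybO: "minv q1 (rep d) \<in> Oi" using minv(1)[OF y(2)] .
        have t0O: "t0 d \<in> Oi" using t0_O[OF B d] .
        have RdB: "Rd d = RR - {r0 d}" using B unfolding Rd_def by simp
        have "(\<Sum>r\<in>Rd d. ee (\<nu> * rep r / p)) = (\<Sum>r\<in>RR. ee (\<nu> * rep r / p)) - ee (\<nu> * rep (r0 d) / p)"
          unfolding RdB sum_diff1[OF finR] using r0[OF d] by simp
        also have "\<dots> = - ee (\<nu> * rep (r0 d) / p)" using cz by simp
        also have "ee (\<nu> * rep (r0 d) / p) = ee (\<nu> * t0 d / p)"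
          unfolding r0_def using e_per1[OF nu p_O p_nz t0O rep_cg[OF t0O]] .
        finally have inner: "(\<Sum>r\<in>Rd d. ee (\<nu> * rep r / p)) = - ee (\<nu> * t0 d / p)" .
        have "ee (\<nu> * rep d / q) * ee (\<nu> * t0 d / p) = ee (\<nu> * rep d / q + \<nu> * t0 d / p)"
          using nu y t0O q_O p_O by (intro e_add[symmetric] Kdiv Kmult O_K cd_K) auto
        also have "\<nu> * rep d / q + \<nu> * t0 d / p = \<nu> * (uu * rep d) / q1"
        proof -
          have "\<nu> * rep d / q + \<nu> * t0 d / p = \<nu> * rep d * (1 - q1 * q1i) / (p * q1)"
            unfolding t0_def q_eq using p_nz q1_nz by (simp add: field_simps)
          also have "\<dots> = \<nu> * rep d * (p * uu) / (p * q1)" using uu(2)[OF B] by simp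
          also have "\<dots> = \<nu> * (uu * rep d) / q1" using p_nz q1_nz by (simp add: field_simps)
          finally show ?thesis .
        qed
        finally have mid: "ee (\<nu> * rep d / q) * ee (\<nu> * t0 d / p) = ee (\<nu> * (uu * rep d) / q1)" .
        have "?A d * ee (\<nu> * (uu * rep d) / q1) = ee (\<mu> * p ^ (m + l - 1) * minv q1 (rep d) / q1 + \<nu> * (uu * rep d) / q1)"
          using nu mu y ybO q1_O p_O uu(1)[OF B] by (intro e_add[symmetric] Kdiv Kmult O_K cd_K O_power) auto
        also have "\<mu> * p ^ (m + l - 1) * minv q1 (rep d) / q1 + \<nu> * (uu * rep d) / q1
            = (\<nu> * (uu * rep d) + \<mu> * (p ^ (m + l - 1) * minv q1 (rep d))) / q1"
          by (simp add: add_divide_distrib mult.assoc)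
        finally have "?A d * ee (\<nu> * (uu * rep d) / q1) = ee ((\<nu> * (uu * rep d) + \<mu> * (p ^ (m + l - 1) * minv q1 (rep d))) / q1)" .
        then show "?A d * (ee (\<nu> * rep d / q) * (\<Sum>r\<in>Rd d. ee (\<nu> * rep r / p))) =
            - ee ((\<nu> * (uu * rep d) + \<mu> * (p ^ (m + l - 1) * minv q1 (rep d))) / q1)"
          unfolding inner mult_minus_right mid by (simp add: mult.assoc)
      qed simp
      also have "\<dots> = - (\<Sum>d\<in>UR q1. ?S1s d)"
        using S1_reindex[OF B nu mu m l] by (simp add: sum_negf)
      finally have "(\<Sum>c\<in>UR q. ?f2 c) = - (\<Sum>d\<in>UR q1. ?S1s d)" .
      then show ?thesis unfolding L2 by (simp add: left_diff_distrib)
    qed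
  next
    case inf: False
    have z1: "(\<Sum>c\<in>UR q. ?f1 c) = 0" "(\<Sum>c\<in>UR q. ?f2 c) = 0"
      by (rule sum.infinite[OF inf])+
    have cover: "UR q \<subseteq> (\<Union>d\<in>UR q1. tau d ` RR)"
    proof
      fix c assume c: "c \<in> UR q"
      have "c \<in> fib (pi c)" unfolding fib_def using c by simp
      then have "c \<in> tau (pi c) ` RR" using fib_sub[OF pi_in[OF c]] by blast
      then show "c \<in> (\<Union>d\<in>UR q1. tau d ` RR)" using pi_in[OF c] by (rule UN_I[rotated])
    qed
    have "of_nat (card RR) * (\<Sum>d\<in>UR q1. ?S1s d) = 0"
    proof (cases "finite RR")
      case False
      then show ?thesis by simp
    next
      case True
      show ?thesis
      proof (cases "finite (UR q1)")
        case True2: True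
        have "finite (\<Union>d\<in>UR q1. tau d ` RR)"
          using True True2 by (intro finite_UN_I finite_imageI)
        then have "finite (UR q)" using cover by (rule finite_subset[rotated])
        then show ?thesis using inf by (rule notE[rotated])
      next
        case False
        then show ?thesis by simp
      qed
    qed
    then show ?thesis using z1 by simp
  qed
  then show ?thesis unfolding klo_eq .
qed

end

theorem corollary4p3:
  fixes K :: "complex set" and \<delta> q p \<nu> \<mu> :: complex and m l :: nat
  assumes "number_field K" and "totally_real K"
    and "narrow_class_number_one K"
    and "generates_different K \<delta>"
    and "q \<in> nf_O K" and "q \<noteq> 0"
    and "m \<ge> 1" and "l \<ge> 1"
    and "\<nu> \<in> nf_codiff K" and "\<mu> \<in> nf_codiff K"
    and "nf_prime_elem K p" and "nf_dvd K p q"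
    and "\<not> nf_dvd K p (\<delta> * \<nu>)" and "\<not> nf_dvd K p (\<delta> * \<mu>)"
  shows "kloosterman K (\<nu> * p ^ m) (\<mu> * p ^ l) q =
           kloosterman K \<nu> (\<mu> * p ^ (m + l)) q
           + of_nat (ideal_norm K p) * kloosterman K (\<nu> * p ^ (m - 1)) (\<mu> * p ^ (l - 1)) (q / p)"
proof -
  have subf: "nf_subfield K" using assms(1) unfolding number_field_def by simp
  have pe: "p \<in> nf_O K" "p \<noteq> 0" "nf_prime_ideal K (principal_ideal K p)"
    using assms(11) unfolding nf_prime_elem_def by auto
  have idl: "nf_ideal K (principal_ideal K p)" and one: "1 \<notin> principal_ideal K p"
    and prm: "\<And>a b. a \<in> nf_O K \<Longrightarrow> b \<in> nf_O K \<Longrightarrow> a * b \<in> principal_ideal K p \<Longrightarrow>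
        a \<in> principal_ideal K p \<or> b \<in> principal_ideal K p"
    using pe(3) unfolding nf_prime_ideal_def by auto
  have pmem: "x \<in> principal_ideal K p \<longleftrightarrow> (\<exists>c\<in>nf_O K. x = p * c)" for x
    unfolding principal_ideal_def by auto
  have Oadd: "a + b \<in> nf_O K" if "a \<in> nf_O K" "b \<in> nf_O K" for a b
  proof -
    have "p * a \<in> principal_ideal K p" "p * b \<in> principal_ideal K p" using that pmem by auto
    then have "p * a + p * b \<in> principal_ideal K p" using idl unfolding nf_ideal_def by blast
    then obtain x where "x \<in> nf_O K" "p * a + p * b = p * x" using pmem by blast
    moreover have "a + b = x" using calculation(2) pe(2) by (simp add: distrib_left[symmetric])
    ultimately show ?thesis by simp
  qed
  have Omult: "a * b \<in> nf_O K" if "a \<in> nf_O K" "b \<in> nf_O K" for a b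
  proof -
    have "p * b \<in> principal_ideal K p" using that pmem by auto
    then have "a * (p * b) \<in> principal_ideal K p" using idl that(1) unfolding nf_ideal_def by blast
    then obtain x where "x \<in> nf_O K" "a * (p * b) = p * x" using pmem by blast
    moreover have "a * b = x" using calculation(2) pe(2) by (simp add: mult.left_commute)
    ultimately show ?thesis by simp
  qed
  interpret kring K using subf Oadd Omult by unfold_locales auto
  obtain c where c: "c \<in> nf_O K" "q = p * c" using assms(12) unfolding nf_dvd_def by blast
  have qp: "q / p = c" using c(2) pe(2) by simp
  have cnz: "c \<noteq> 0" using c(2) assms(6) by auto
  have cgmem: "nf_cong K p x 0 \<longleftrightarrow> x \<in> principal_ideal K p" for x
    unfolding nf_cong_def pmem by simp
  interpret kfib K p q c
  proof unfold_locales
    show "\<And>a b. a \<in> nf_O K \<Longrightarrow> b \<in> nf_O K \<Longrightarrow> nf_cong K p (a * b) 0 \<Longrightarrow> nf_cong K p a 0 \<or> nf_cong K p b 0"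
      unfolding cgmem using prm by blast
    show "\<not> nf_cong K p 1 0" unfolding cgmem using one .
  qed (use pe c cnz in auto)
  have gd: "\<delta> \<in> nf_O K" "\<delta> \<noteq> 0" "nf_codiff K = {x / \<delta> | x. x \<in> nf_O K}"
    using assms(4) unfolding generates_different_def by auto
  have "kloosterman K (\<nu> * p ^ m) (\<mu> * p ^ l) q =
     kloosterman K \<nu> (\<mu> * p ^ (m + l)) q + of_nat (card (nf_residues K p)) * kloosterman K (\<nu> * p ^ (m - 1)) (\<mu> * p ^ (l - 1)) c"
    using main_kfib[OF assms(9) assms(10) gd(3) gd(2) assms(13) assms(7) assms(8)] .
  then show ?thesis unfolding qp ideal_norm_def .
qed

end
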